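(* Let $w=w_1\cdots w_n$ be a fixed word of length $n\ge 2$. If $w_i=w_{n-i+1}$ for all $1\le i\le n$, then $\lim_{d\to\infty}\frac{f(w,d)}{\frac12(n+2)^d}=1$; otherwise $\lim_{d\to\infty}\frac{f(w,d)}{\frac14(n+2)^d}=1$.
   Context: Let $[n]=\{1,\dots,n\}$, $n\ge 2$, $d\ge 1$. For $p\in[n]^d$ and $v\in\{-1,0,1\}^d$ with $v\ne\vec 0$, if $p+tv\in[n]^d$ for all $0\le t\le n-1$, the set $\ell=\{p,p+v,\dots,p+(n-1)v\}$ is called a line (with initial point $p$ and direction $v$). Each line has a unique representation $(p;v)$ in which the first nonzero coordinate of $v$ is $+1$ (its canonical pair); for such a representation write $\ell_i=p+(i-1)v$ for $1\le i\le n$. An $(n,d)$-grid is a function $G:[n]^d\to\Sigma$ for an arbitrary set of letters $\Sigma$. For a word $w=w_1\cdots w_n$, a line $\ell$ contains $w$ if $G(\ell_1)G(\ell_2)\cdots G(\ell_n)=w$ or $G(\ell_n)\cdots G(\ell_1)=w$. $f(w,G)$ is the number of lines of $[n]^d$ containing $w$, and $f(w,d)=\max_G f(w,G)$ over all $(n,d)$-grids $G$. *)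

theory Defs
  imports Complex_Main
begin

definition point_in :: "nat \<Rightarrow> nat \<Rightarrow> int list \<Rightarrow> bool" where
  "point_in n d p \<longleftrightarrow> length p = d \<and> (\<forall>x\<in>set p. 1 \<le> x \<and> x \<le> int n)"

definition direction :: "nat \<Rightarrow> int list \<Rightarrow> bool" where
  "direction d v \<longleftrightarrow> length v = d \<and> (\<forall>x\<in>set v. x \<in> {-1, 0, 1}) \<and> (\<exists>x\<in>set v. x \<noteq> 0)"

definition shift :: "int list \<Rightarrow> int list \<Rightarrow> int \<Rightarrow> int list" where
  "shift p v t = map2 (\<lambda>a b. a + t * b) p v"

definition line_pair :: "nat \<Rightarrow> nat \<Rightarrow> int list \<Rightarrow> int list \<Rightarrow> bool" where
  "line_pair n d p v \<longleftrightarrow> point_in n d p \<and> direction d v \<and>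
     (\<forall>t::nat. t \<le> n - 1 \<longrightarrow> point_in n d (shift p v (int t)))"

definition canonical_pair :: "nat \<Rightarrow> nat \<Rightarrow> int list \<Rightarrow> int list \<Rightarrow> bool" where
  "canonical_pair n d p v \<longleftrightarrow> line_pair n d p v \<and> hd (filter (\<lambda>x. x \<noteq> 0) v) = 1"

definition line_set :: "nat \<Rightarrow> int list \<Rightarrow> int list \<Rightarrow> int list set" where
  "line_set n p v = {shift p v (int t) | t. t \<le> n - 1}"

definition is_line :: "nat \<Rightarrow> nat \<Rightarrow> int list set \<Rightarrow> bool" where
  "is_line n d L \<longleftrightarrow> (\<exists>p v. line_pair n d p v \<and> L = line_set n p v)"

definition line_contains :: "nat \<Rightarrow> nat \<Rightarrow> (int list \<Rightarrow> 'a) \<Rightarrow> 'a list \<Rightarrow> int list set \<Rightarrow> bool" where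
  "line_contains n d G w L \<longleftrightarrow> (\<exists>p v. canonical_pair n d p v \<and> L = line_set n p v \<and>
     (let r = map (\<lambda>i. G (shift p v (int i))) [0..<n] in r = w \<or> rev r = w))"

definition f_grid :: "'a list \<Rightarrow> nat \<Rightarrow> (int list \<Rightarrow> 'a) \<Rightarrow> nat" where
  "f_grid w d G = card {L. is_line (length w) d L \<and> line_contains (length w) d G w L}"

definition f_word :: "'a list \<Rightarrow> nat \<Rightarrow> nat" where
  "f_word w d = Max (range (f_grid w d))"

end

theory Submission
  imports Defs "HOL-Library.List_Lexorder"
begin

definition Al :: "nat \<Rightarrow> (int \<times> int) set" where
  "Al n = (\<lambda>c. (c, 0)) ` {1..int n} \<union> {(1, 1), (int n, -1)}"

definition Wd :: "nat \<Rightarrow> nat \<Rightarrow> (int \<times> int) list set" where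
  "Wd n d = {u. set u \<subseteq> Al n \<and> length u = d}"

definition pt :: "(int \<times> int) list \<Rightarrow> int \<Rightarrow> int list" where
  "pt u t = map (\<lambda>(a, b). a + t * b) u"

lemma Al_cases: "z \<in> Al n \<Longrightarrow> (\<exists>c. z = (c, 0) \<and> 1 \<le> c \<and> c \<le> int n) \<or> z = (1, 1) \<or> z = (int n, -1)"
  unfolding Al_def by auto

lemma AlE:
  assumes "z \<in> Al n"
  obtains c where "z = (c, 0)" "1 \<le> c" "c \<le> int n" | "z = (1, 1)" | "z = (int n, -1)"
  using assms unfolding Al_def by auto

lemma finite_Al: "finite (Al n)" unfolding Al_def by auto

lemma card_Al: assumes "n \<ge> 2" shows "card (Al n) = n + 2"
proof -
  have inj: "inj_on (\<lambda>c::int. (c, 0::int)) {1..int n}" by (auto simp: inj_on_def)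
  have c1: "card ((\<lambda>c::int. (c, 0::int)) ` {1..int n}) = n" using card_image[OF inj] by simp
  have "card {(1::int, 1::int), (int n, -1)} = 2" using assms by auto
  moreover have "(\<lambda>c::int. (c, 0::int)) ` {1..int n} \<inter> {(1, 1), (int n, -1)} = {}" by auto
  ultimately show ?thesis unfolding Al_def using c1 card_Un_disjoint by (simp add: card_Un_disjoint)
qed

lemma shift_map: "shift (map fst u) (map snd u) t = pt u t"
  unfolding shift_def pt_def by (simp add: zip_map_fst_snd)

lemma shift_len: "length (shift p v t) = min (length p) (length v)"
  unfolding shift_def by simp

lemma word_line_pair:
  assumes "u \<in> Wd n d" "\<exists>z\<in>set u. snd z \<noteq> 0" "n \<ge> 1"
  shows "line_pair n d (map fst u) (map snd u)"
proof -
  have A: "set u \<subseteq> Al n" and L: "length u = d" using assms(1) unfolding Wd_def by auto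
  have pin: "point_in n d (map fst u)" unfolding point_in_def using A L assms(3) by (auto dest!: Al_cases)
  have dir: "direction d (map snd u)" unfolding direction_def using A L assms(2) by (auto dest!: Al_cases)
  have "point_in n d (shift (map fst u) (map snd u) (int t))" if "t \<le> n - 1" for t
    unfolding shift_map point_in_def pt_def using A L that assms(3) by (auto dest!: Al_cases)
  thus ?thesis unfolding line_pair_def using pin dir by auto
qed

lemma line_pair_word:
  assumes "line_pair n d p v"
  shows "zip p v \<in> Wd n d" "p = map fst (zip p v)" "v = map snd (zip p v)" "\<exists>z\<in>set (zip p v). snd z \<noteq> 0"
proof -
  have lp: "length p = d" "length v = d" using assms unfolding line_pair_def point_in_def direction_def by auto
  show "p = map fst (zip p v)" "v = map snd (zip p v)" using lp by auto
  have "z \<in> Al n" if z: "z \<in> set (zip p v)" for z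
  proof -
    obtain a b where ab: "z = (a, b)" by force
    have a: "a \<in> set p" and b: "b \<in> set v" using z ab by (auto dest: set_zip_leftD set_zip_rightD)
    have ar: "1 \<le> a" "a \<le> int n" using a assms unfolding line_pair_def point_in_def by auto
    have br: "b \<in> {-1, 0, 1}" using b assms unfolding line_pair_def direction_def by auto
    have "point_in n d (shift p v (int (n - 1)))" using assms unfolding line_pair_def by auto
    moreover have "a + int (n - 1) * b \<in> set (shift p v (int (n - 1)))"
      unfolding shift_def using z ab by force
    ultimately have "1 \<le> a + int (n - 1) * b" "a + int (n - 1) * b \<le> int n"
      unfolding point_in_def by auto
    then show ?thesis using ar br ab unfolding Al_def
      by (cases "n = 0") (auto simp: of_nat_diff)
  qed
  then show "zip p v \<in> Wd n d" unfolding Wd_def using lp by auto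
  obtain b where "b \<in> set v" "b \<noteq> 0" using assms unfolding line_pair_def direction_def by auto
  then obtain j where j: "j < length v" "v ! j \<noteq> 0" by (auto simp: in_set_conv_nth)
  then have "(p ! j, v ! j) \<in> set (zip p v)" using lp by (metis in_set_zip fst_conv snd_conv)
  then show "\<exists>z\<in>set (zip p v). snd z \<noteq> 0" using j by force
qed

definition Fl :: "nat \<Rightarrow> int \<Rightarrow> int list \<Rightarrow> int list \<Rightarrow> int list set" where
  "Fl n \<alpha> x y = {map2 (\<lambda>a b. if a = b then a else if a = \<alpha> then 1 + int t else int n - int t) x y | t. t \<le> n - 1}"

definition kap :: "nat \<Rightarrow> int \<Rightarrow> int list \<Rightarrow> int list" where
  "kap n \<alpha> x = map (\<lambda>c. if c = \<alpha> \<or> c = int n + 1 - \<alpha> then 0 else c) x"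

definition Rl :: "nat \<Rightarrow> nat \<Rightarrow> int \<Rightarrow> (int list \<times> int list) set" where
  "Rl n d \<alpha> = {(x, y). point_in n d x \<and> point_in n d y \<and> kap n \<alpha> x = kap n \<alpha> y}"

lemma map2_map_same: "map2 g (map f1 u) (map f2 u) = map (\<lambda>z. g (f1 z) (f2 z)) u"
  by (induction u) auto

lemma line_set_pt: "line_set n (map fst u) (map snd u) = {pt u (int t) | t. t \<le> n - 1}"
  unfolding line_set_def shift_map by simp

lemma endpoints:
  assumes "set u \<subseteq> Al n" "i < n" "2 * i \<noteq> n - 1"
  shows "line_set n (map fst u) (map snd u) = Fl n (int i + 1) (pt u (int i)) (pt u (int (n - 1 - i)))"
    "line_set n (map fst u) (map snd u) = Fl n (int i + 1) (pt u (int (n - 1 - i))) (pt u (int i))"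
    "kap n (int i + 1) (pt u (int i)) = kap n (int i + 1) (pt u (int (n - 1 - i)))"
proof -
  have ni: "int (n - 1 - i) = int n - 1 - int i" using assms(2) by (simp add: of_nat_diff)
  have ne: "int n - int i \<noteq> 1 + int i" using assms(2,3) by linarith
  have e1: "map2 (\<lambda>a b. if a = b then a else if a = int i + 1 then 1 + int t else int n - int t)
      (pt u (int i)) (pt u (int (n - 1 - i))) = pt u (int t)" for t
    unfolding pt_def map2_map_same
  proof (rule map_cong[OF refl], goal_cases)
    case (1 z)
    then have "z \<in> Al n" using assms(1) by auto
    then show ?case
    proof (cases rule: AlE)
      case 1 then show ?thesis by simp
    next
      case 2 then show ?thesis using ni ne by simp
    next
      case 3 then show ?thesis using ni ne by simp
    qed
  qed
  have e2: "map2 (\<lambda>a b. if a = b then a else if a = int i + 1 then 1 + int t else int n - int t)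
      (pt u (int (n - 1 - i))) (pt u (int i)) = pt u (int (n - 1 - t))" if "t \<le> n - 1" for t
    unfolding pt_def map2_map_same
  proof (rule map_cong[OF refl], goal_cases)
    have nt: "int (n - 1 - t) = int n - 1 - int t" using that assms(2) by (simp add: of_nat_diff)
    case (1 z)
    then have "z \<in> Al n" using assms(1) by auto
    then show ?case
    proof (cases rule: AlE)
      case 1 then show ?thesis by simp
    next
      case 2 then show ?thesis using ni ne nt by simp
    next
      case 3 then show ?thesis using ni ne nt by simp
    qed
  qed
  show "line_set n (map fst u) (map snd u) = Fl n (int i + 1) (pt u (int i)) (pt u (int (n - 1 - i)))"
    unfolding line_set_pt Fl_def e1 by simp
  have "Fl n (int i + 1) (pt u (int (n - 1 - i))) (pt u (int i)) = {pt u (int (n - 1 - t)) | t. t \<le> n - 1}"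
  proof (intro set_eqI iffI)
    fix x assume "x \<in> Fl n (int i + 1) (pt u (int (n - 1 - i))) (pt u (int i))"
    then show "x \<in> {pt u (int (n - 1 - t)) | t. t \<le> n - 1}" unfolding Fl_def using e2 by auto
  next
    fix x assume "x \<in> {pt u (int (n - 1 - t)) | t. t \<le> n - 1}"
    then obtain t where t: "t \<le> n - 1" "x = pt u (int (n - 1 - t))" by auto
    have "x = map2 (\<lambda>a b. if a = b then a else if a = int i + 1 then 1 + int t else int n - int t)
      (pt u (int (n - 1 - i))) (pt u (int i))" using e2[OF t(1)] t(2) by simp
    then show "x \<in> Fl n (int i + 1) (pt u (int (n - 1 - i))) (pt u (int i))"
      unfolding Fl_def using t(1) by blast
  qed
  also have "\<dots> = {pt u (int t) | t. t \<le> n - 1}"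
  proof (intro set_eqI iffI)
    fix x assume "x \<in> {pt u (int (n - 1 - t)) | t. t \<le> n - 1}"
    then show "x \<in> {pt u (int t) | t. t \<le> n - 1}" by auto
  next
    fix x assume "x \<in> {pt u (int t) | t. t \<le> n - 1}"
    then obtain t where "t \<le> n - 1" "x = pt u (int t)" by auto
    then have "x = pt u (int (n - 1 - (n - 1 - t)))" "n - 1 - t \<le> n - 1" using assms(2) by auto
    then show "x \<in> {pt u (int (n - 1 - t)) | t. t \<le> n - 1}" by blast
  qed
  finally show "line_set n (map fst u) (map snd u) = Fl n (int i + 1) (pt u (int (n - 1 - i))) (pt u (int i))"
    unfolding line_set_pt by simp
  show "kap n (int i + 1) (pt u (int i)) = kap n (int i + 1) (pt u (int (n - 1 - i)))"
    unfolding kap_def pt_def map_map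
  proof (rule map_cong[OF refl], goal_cases)
    case (1 z)
    then have "z \<in> Al n" using assms(1) by auto
    then show ?case
    proof (cases rule: AlE)
      case 1 then show ?thesis by simp
    next
      case 2 then show ?thesis using ni ne by simp
    next
      case 3 then show ?thesis using ni ne by simp
    qed
  qed
qed

lemma finite_points: "finite {x. point_in n d x}"
proof (rule finite_subset[OF _ finite_lists_length_eq[OF finite_atLeastAtMost[of "1::int" "int n"], of d]])
  show "{x. point_in n d x} \<subseteq> {xs. set xs \<subseteq> {1..int n} \<and> length xs = d}"
    unfolding point_in_def by auto
qed

lemma card_Rl:
  assumes "1 \<le> \<alpha>" "\<alpha> \<le> int n" "\<alpha> \<noteq> int n + 1 - \<alpha>"
  shows "card (Rl n d \<alpha>) \<le> (n + 2) ^ d" "finite (Rl n d \<alpha>)"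
proof -
  define \<beta> where "\<beta> = int n + 1 - \<alpha>"
  define k1 where "k1 = (\<lambda>c::int. if c = \<alpha> \<or> c = \<beta> then 0 else c)"
  define QP where "QP = {(a, b). a \<in> {1..int n} \<and> b \<in> {1..int n} \<and> k1 a = k1 b}"
  have b1: "1 \<le> \<beta>" "\<beta> \<le> int n" "\<alpha> \<noteq> \<beta>" using assms unfolding \<beta>_def by auto
  define U where "U = (\<lambda>a. (a, a)) ` ({1..int n} - {\<alpha>, \<beta>}) \<union> ({\<alpha>, \<beta>} \<times> {\<alpha>, \<beta>})"
  have QU: "QP \<subseteq> U"
    unfolding QP_def k1_def U_def by (auto split: if_splits)
  have fU: "finite U" unfolding U_def by auto
  have fQ: "finite QP" using QU fU by (metis finite_subset)
  have "card QP \<le> card U" using QU fU by (metis card_mono)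
  also have "\<dots> \<le> card ((\<lambda>a. (a, a)) ` ({1..int n} - {\<alpha>, \<beta>})) + card ({\<alpha>, \<beta>} \<times> {\<alpha>, \<beta>})"
    unfolding U_def by (rule card_Un_le)
  also have "\<dots> \<le> card ({1..int n} - {\<alpha>, \<beta>}) + 4"
  proof -
    have "card ((\<lambda>a. (a, a)) ` ({1..int n} - {\<alpha>, \<beta>})) \<le> card ({1..int n} - {\<alpha>, \<beta>})" by (rule card_image_le) auto
    moreover have "card ({\<alpha>, \<beta>} \<times> {\<alpha>, \<beta>}) \<le> 4" using b1 by (simp add: card_cartesian_product)
    ultimately show ?thesis by simp
  qed
  also have "card ({1..int n} - {\<alpha>, \<beta>}) = n - 2"
    using b1 assms by (subst card_Diff_subset) auto
  finally have "card QP \<le> n - 2 + 4" by simp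
  moreover have "int n \<ge> 2" using b1 assms by linarith
  ultimately have cQ: "card QP \<le> n + 2" by linarith
  have sub: "Rl n d \<alpha> \<subseteq> (\<lambda>zs. (map fst zs, map snd zs)) ` {zs. set zs \<subseteq> QP \<and> length zs = d}"
  proof
    fix q assume "q \<in> Rl n d \<alpha>"
    then obtain x y where q: "q = (x, y)" "point_in n d x" "point_in n d y" "kap n \<alpha> x = kap n \<alpha> y"
      unfolding Rl_def by auto
    have lx: "length x = d" "length y = d" using q unfolding point_in_def by auto
    have "set (zip x y) \<subseteq> QP"
    proof
      fix z assume "z \<in> set (zip x y)"
      then obtain j where j: "j < length x" "j < length y" "z = (x ! j, y ! j)" by (auto simp: in_set_zip)
      have "kap n \<alpha> x ! j = kap n \<alpha> y ! j" using q by simp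
      then have "k1 (x ! j) = k1 (y ! j)" using j unfolding kap_def k1_def \<beta>_def by simp
      moreover have "x ! j \<in> {1..int n}" "y ! j \<in> {1..int n}" using q j nth_mem unfolding point_in_def by fastforce+
      ultimately show "z \<in> QP" unfolding QP_def using j by simp
    qed
    then show "q \<in> (\<lambda>zs. (map fst zs, map snd zs)) ` {zs. set zs \<subseteq> QP \<and> length zs = d}"
      using lx q by (intro image_eqI[where x = "zip x y"]) auto
  qed
  have fin: "finite {zs. set zs \<subseteq> QP \<and> length zs = d}" using fQ by (rule finite_lists_length_eq)
  show "finite (Rl n d \<alpha>)" using finite_subset[OF sub] fin by blast
  have "card (Rl n d \<alpha>) \<le> card ((\<lambda>zs. (map fst zs, map snd zs)) ` {zs. set zs \<subseteq> QP \<and> length zs = d})"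
    using sub fin by (intro card_mono) auto
  also have "\<dots> \<le> card {zs. set zs \<subseteq> QP \<and> length zs = d}" by (rule card_image_le[OF fin])
  also have "\<dots> = card QP ^ d" using fQ by (rule card_lists_length_eq)
  also have "\<dots> \<le> (n + 2) ^ d" using cQ by (rule power_mono) simp
  finally show "card (Rl n d \<alpha>) \<le> (n + 2) ^ d" .
qed

lemma cut_bound:
  fixes k :: "'a \<Rightarrow> 'b"
  assumes "finite S" "X \<inter> Y = {}"
  shows "4 * card {(x, y). x \<in> S \<and> y \<in> S \<and> k x = k y \<and> x \<in> X \<and> y \<in> Y}
      \<le> card {(x, y). x \<in> S \<and> y \<in> S \<and> k x = k y}"
proof -
  define K where "K c = {x \<in> S. k x = c}" for c
  have fK: "finite (K c)" for c unfolding K_def using assms(1) by auto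
  have e1: "{(x, y). x \<in> S \<and> y \<in> S \<and> k x = k y \<and> x \<in> X \<and> y \<in> Y} = (\<Union>c\<in>k ` S. (K c \<inter> X) \<times> (K c \<inter> Y))"
    unfolding K_def by auto
  have e2: "{(x, y). x \<in> S \<and> y \<in> S \<and> k x = k y} = (\<Union>c\<in>k ` S. K c \<times> K c)"
    unfolding K_def by auto
  have c1: "card (\<Union>c\<in>k ` S. (K c \<inter> X) \<times> (K c \<inter> Y)) = (\<Sum>c\<in>k ` S. card ((K c \<inter> X) \<times> (K c \<inter> Y)))"
    using assms(1) fK by (intro card_UN_disjoint) (auto simp: K_def)
  have c2: "card (\<Union>c\<in>k ` S. K c \<times> K c) = (\<Sum>c\<in>k ` S. card (K c \<times> K c))"
    using assms(1) fK by (intro card_UN_disjoint) (auto simp: K_def)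
  have t: "4 * card ((K c \<inter> X) \<times> (K c \<inter> Y)) \<le> card (K c \<times> K c)" for c
  proof -
    define a where "a = card (K c \<inter> X)"
    define b where "b = card (K c \<inter> Y)"
    have "card ((K c \<inter> X) \<union> (K c \<inter> Y)) = a + b" unfolding a_def b_def using fK assms(2)
      by (intro card_Un_disjoint) auto
    moreover have "card ((K c \<inter> X) \<union> (K c \<inter> Y)) \<le> card (K c)" using fK by (intro card_mono) auto
    ultimately have ab: "a + b \<le> card (K c)" by simp
    have "4 * (a * b) \<le> (a + b) * (a + b)"
    proof -
      have "0 \<le> (int a - int b)^2" by simp
      then have "4 * (int a * int b) \<le> (int a + int b) * (int a + int b)" by (simp add: power2_eq_square algebra_simps)
      then show ?thesis by (metis (mono_tags) of_nat_add of_nat_le_iff of_nat_mult of_nat_numeral)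
    qed
    also have "\<dots> \<le> card (K c) * card (K c)" using ab by (intro mult_mono) auto
    finally show ?thesis unfolding a_def b_def by (simp add: card_cartesian_product)
  qed
  show ?thesis unfolding e1 e2 c1 c2 sum_distrib_left using t by (intro sum_mono) auto
qed

lemma half_bound:
  fixes R :: "('a::linorder \<times> 'a) set"
  assumes "finite R" "\<And>x y. (x, y) \<in> R \<Longrightarrow> (y, x) \<in> R"
  shows "2 * card {(x, y). (x, y) \<in> R \<and> x < y} \<le> card R"
proof -
  let ?A = "{(x, y). (x, y) \<in> R \<and> x < y}"
  let ?B = "{(x, y). (x, y) \<in> R \<and> y < x}"
  have "?B = prod.swap ` ?A" using assms(2) by (auto simp: image_iff)
  then have "card ?B = card ?A" by (simp add: card_image)
  moreover have "card (?A \<union> ?B) = card ?A + card ?B"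
    using assms(1) by (intro card_Un_disjoint) (auto intro: finite_subset)
  moreover have "card (?A \<union> ?B) \<le> card R" using assms(1) by (intro card_mono) auto
  ultimately show ?thesis by simp
qed

lemma pt_point:
  assumes "line_pair n d p v" "t \<le> n - 1"
  shows "point_in n d (pt (zip p v) (int t))"
  using assms line_pair_word(2,3)[OF assms(1)] shift_map[of "zip p v" "int t"]
  unfolding line_pair_def by metis

lemma line_pair_u:
  assumes "line_pair n d p v"
  shows "line_set n p v = line_set n (map fst (zip p v)) (map snd (zip p v))"
    "\<And>t. shift p v t = pt (zip p v) t"
  using line_pair_word(2,3)[OF assms] shift_map by metis+

lemma pt_ne:
  assumes "\<exists>z\<in>set u. snd z \<noteq> 0" "n \<ge> 2"
  shows "pt u 0 \<noteq> pt u (int (n - 1))"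
proof
  assume "pt u 0 = pt u (int (n - 1))"
  then have "\<forall>z\<in>set u. fst z = fst z + int (n - 1) * snd z"
    unfolding pt_def map_eq_conv by (auto simp: split_beta)
  moreover obtain z where "z \<in> set u" "snd z \<noteq> 0" using assms by auto
  ultimately show False using assms(2) by auto
qed

lemma line_sub_pal:
  assumes "n \<ge> 2" "is_line n d L"
  shows "\<exists>x y. (x, y) \<in> Rl n d 1 \<and> x < y \<and> L = Fl n 1 x y"
proof -
  obtain p v where lp: "line_pair n d p v" and L: "L = line_set n p v" using assms unfolding is_line_def by auto
  define u where "u = zip p v"
  have uW: "set u \<subseteq> Al n" using line_pair_word(1)[OF lp] unfolding u_def Wd_def by auto
  have L': "L = line_set n (map fst u) (map snd u)" using L line_pair_u(1)[OF lp] unfolding u_def by simp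
  have i0: "2 * 0 \<noteq> n - 1" "0 < n" using assms by auto
  note E = endpoints[OF uW i0(2) i0(1)]
  define x where "x = pt u (int 0)"
  define y where "y = pt u (int (n - 1 - 0))"
  have px: "point_in n d x" "point_in n d y" unfolding x_def y_def u_def using pt_point[OF lp, of 0] pt_point[OF lp, of "n - 1"] by simp_all
  have k: "kap n 1 x = kap n 1 y" using E(3) unfolding x_def y_def by simp
  have ne: "x \<noteq> y" using pt_ne[OF line_pair_word(4)[OF lp] assms(1)] unfolding x_def y_def u_def by simp
  have R1: "(x, y) \<in> Rl n d 1" "(y, x) \<in> Rl n d 1" unfolding Rl_def using px k by auto
  have L1: "L = Fl n 1 x y" "L = Fl n 1 y x" using E(1,2) L' unfolding x_def y_def by simp_all
  show ?thesis
  proof (cases "x < y")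
    case True then show ?thesis using R1 L1 by blast
  next
    case False then have "y < x" using ne by auto
    then show ?thesis using R1 L1 by blast
  qed
qed

lemma ub_pal:
  assumes "length w \<ge> 2"
  shows "2 * f_grid w d G \<le> (length w + 2) ^ d" "finite {L. is_line (length w) d L \<and> line_contains (length w) d G w L}"
proof -
  define n where "n = length w"
  have n2: "n \<ge> 2" using assms n_def by simp
  define S where "S = {L. is_line n d L \<and> line_contains n d G w L}"
  define A where "A = {(x, y). (x, y) \<in> Rl n d 1 \<and> x < y}"
  have sub: "S \<subseteq> (\<lambda>(x, y). Fl n 1 x y) ` A"
  proof
    fix L assume "L \<in> S"
    then obtain x y where "(x, y) \<in> Rl n d 1" "x < y" "L = Fl n 1 x y"
      using line_sub_pal[OF n2] unfolding S_def by blast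
    then show "L \<in> (\<lambda>(x, y). Fl n 1 x y) ` A" unfolding A_def by force
  qed
  have cR: "card (Rl n d 1) \<le> (n + 2) ^ d" "finite (Rl n d 1)" using card_Rl[of 1 n d] n2 by auto
  have fA: "finite A" unfolding A_def using cR(2) by (auto intro: finite_subset)
  have "2 * card A \<le> card (Rl n d 1)" unfolding A_def
    by (rule half_bound[OF cR(2)]) (auto simp: Rl_def)
  moreover have "card S \<le> card A"
    using card_mono[OF finite_imageI[OF fA] sub] card_image_le[OF fA, of "\<lambda>(x, y). Fl n 1 x y"] by linarith
  ultimately have "2 * card S \<le> (n + 2) ^ d" using cR(1) by linarith
  then show "2 * f_grid w d G \<le> (length w + 2) ^ d" unfolding f_grid_def S_def n_def by simp
  show "finite {L. is_line (length w) d L \<and> line_contains (length w) d G w L}"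
    using finite_subset[OF sub finite_imageI[OF fA]] unfolding S_def n_def by simp
qed

lemma ub_nonpal:
  assumes "length w \<ge> 2" "i < length w" "w ! i \<noteq> w ! (length w - 1 - i)"
  shows "4 * f_grid w d G \<le> (length w + 2) ^ d"
proof -
  define n where "n = length w"
  have n2: "n \<ge> 2" using assms n_def by simp
  have i1: "2 * i \<noteq> n - 1"
  proof
    assume "2 * i = n - 1"
    then have "n - 1 - i = i" by arith
    with assms(3) show False unfolding n_def by simp
  qed
  have i: "i < n" "2 * i \<noteq> n - 1" using assms i1 unfolding n_def by auto
  define \<alpha> where "\<alpha> = int i + 1"
  define P where "P = {x. point_in n d x}"
  define X where "X = {x. G x = w ! i}"
  define Y where "Y = {x. G x = w ! (n - 1 - i)}"
  define A where "A = {(x, y). x \<in> P \<and> y \<in> P \<and> kap n \<alpha> x = kap n \<alpha> y \<and> x \<in> X \<and> y \<in> Y}"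
  define S where "S = {L. is_line n d L \<and> line_contains n d G w L}"
  have sub: "S \<subseteq> (\<lambda>(x, y). Fl n \<alpha> x y) ` A"
  proof
    fix L assume "L \<in> S"
    then obtain p v where cp: "canonical_pair n d p v" and L: "L = line_set n p v"
      and r: "map (\<lambda>i. G (shift p v (int i))) [0..<n] = w \<or> rev (map (\<lambda>i. G (shift p v (int i))) [0..<n]) = w"
      unfolding S_def line_contains_def Let_def by blast
    have lp: "line_pair n d p v" using cp unfolding canonical_pair_def by auto
    define u where "u = zip p v"
    have uW: "set u \<subseteq> Al n" using line_pair_word(1)[OF lp] unfolding u_def Wd_def by auto
    have L': "L = line_set n (map fst u) (map snd u)" using L line_pair_u(1)[OF lp] unfolding u_def by simp
    define r where "r = map (\<lambda>i. G (pt u (int i))) [0..<n]"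
    have rr: "r = w \<or> rev r = w" using r line_pair_u(2)[OF lp] unfolding r_def u_def by simp
    have lr: "length r = n" unfolding r_def by simp
    have r1: "r ! i = G (pt u (int i))" "r ! (n - 1 - i) = G (pt u (int (n - 1 - i)))"
      unfolding r_def using i by auto
    note E = endpoints[OF uW i(1) i(2)]
    have px: "pt u (int i) \<in> P" "pt u (int (n - 1 - i)) \<in> P"
      unfolding P_def u_def using pt_point[OF lp, of i] pt_point[OF lp, of "n - 1 - i"] i(1)
      by (simp_all del: of_nat_diff)
    show "L \<in> (\<lambda>(x, y). Fl n \<alpha> x y) ` A"
      using rr
    proof
      assume "r = w"
      then have "(pt u (int i), pt u (int (n - 1 - i))) \<in> A"
        unfolding A_def X_def Y_def \<alpha>_def using px E(3) r1 by simp
      then show ?thesis using E(1) L' unfolding \<alpha>_def by force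
    next
      assume rw: "rev r = w"
      have "w ! i = r ! (n - 1 - i)" "w ! (n - 1 - i) = r ! i"
        using rw lr i by (auto simp: rev_nth)
      then have "(pt u (int (n - 1 - i)), pt u (int i)) \<in> A"
        unfolding A_def X_def Y_def \<alpha>_def using px E(3) r1 by simp
      then show ?thesis using E(2) L' unfolding \<alpha>_def by force
    qed
  qed
  have al: "1 \<le> \<alpha>" "\<alpha> \<le> int n" "\<alpha> \<noteq> int n + 1 - \<alpha>" unfolding \<alpha>_def using i by auto
  have cR: "card (Rl n d \<alpha>) \<le> (n + 2) ^ d" "finite (Rl n d \<alpha>)" using card_Rl[OF al] by auto
  have fP: "finite P" unfolding P_def by (rule finite_points)
  have XY: "X \<inter> Y = {}" unfolding X_def Y_def using assms(3) n_def by auto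
  have Req: "Rl n d \<alpha> = {(x, y). x \<in> P \<and> y \<in> P \<and> kap n \<alpha> x = kap n \<alpha> y}"
    unfolding Rl_def P_def by auto
  have "4 * card A \<le> card (Rl n d \<alpha>)" unfolding A_def Req by (rule cut_bound[OF fP XY])
  moreover have fA: "finite A" unfolding A_def using fP by (auto intro: finite_subset)
  moreover have "card S \<le> card A"
    using card_mono[OF finite_imageI[OF fA] sub] card_image_le[OF fA, of "\<lambda>(x, y). Fl n \<alpha> x y"] by linarith
  ultimately have "4 * card S \<le> (n + 2) ^ d" using cR(1) by linarith
  then show ?thesis unfolding f_grid_def S_def n_def by simp
qed

definition Ls :: "'b set \<Rightarrow> nat \<Rightarrow> 'b list set" where
  "Ls A d = {u. set u \<subseteq> A \<and> length u = d}"

definition cnt :: "'b set \<Rightarrow> 'b list \<Rightarrow> nat" where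
  "cnt B u = length (filter (\<lambda>z. z \<in> B) u)"

lemma Ls_Suc: "Ls A (Suc d) = (\<lambda>(x, u). x # u) ` (A \<times> Ls A d)"
proof (intro set_eqI iffI)
  fix u assume "u \<in> Ls A (Suc d)"
  then obtain x u' where "u = x # u'" "length u' = d" "set u \<subseteq> A" unfolding Ls_def by (auto simp: length_Suc_conv)
  then show "u \<in> (\<lambda>(x, u). x # u) ` (A \<times> Ls A d)" unfolding Ls_def by force
qed (auto simp: Ls_def)

lemma finite_Ls: "finite A \<Longrightarrow> finite (Ls A d)"
  unfolding Ls_def by (rule finite_lists_length_eq)

lemma card_Ls: "finite A \<Longrightarrow> card (Ls A d) = card A ^ d"
  unfolding Ls_def by (rule card_lists_length_eq)

lemma sum_Ls_Suc:
  assumes "finite A"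
  shows "(\<Sum>u\<in>Ls A (Suc d). f u) = (\<Sum>x\<in>A. \<Sum>u\<in>Ls A d. f (x # u))"
proof -
  have inj: "inj_on (\<lambda>(x, u). x # u) (A \<times> Ls A d)" by (auto simp: inj_on_def)
  have "(\<Sum>u\<in>Ls A (Suc d). f u) = (\<Sum>q\<in>A \<times> Ls A d. f ((\<lambda>(x, u). x # u) q))"
    unfolding Ls_Suc by (rule sum.reindex[OF inj, unfolded comp_def])
  also have "\<dots> = (\<Sum>x\<in>A. \<Sum>u\<in>Ls A d. f (x # u))"
    by (subst sum.cartesian_product) (simp add: split_beta)
  finally show ?thesis .
qed

lemma Ls_0: "Ls A 0 = {[]}" unfolding Ls_def by auto

lemma sum_prod_Ls:
  fixes g :: "'b \<Rightarrow> int"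
  assumes "finite A"
  shows "(\<Sum>u\<in>Ls A d. prod_list (map g u)) = (sum g A) ^ d"
proof (induction d)
  case 0 then show ?case by (simp add: Ls_0)
next
  case (Suc d)
  have "(\<Sum>u\<in>Ls A (Suc d). prod_list (map g u)) = (\<Sum>x\<in>A. \<Sum>u\<in>Ls A d. g x * prod_list (map g u))"
    by (subst sum_Ls_Suc[OF assms]) simp
  also have "\<dots> = (\<Sum>x\<in>A. g x * (sum g A) ^ d)" by (rule sum.cong) (simp_all add: Suc.IH flip: sum_distrib_left)
  also have "\<dots> = (sum g A) ^ Suc d" by (simp add: sum_distrib_right)
  finally show ?case .
qed

lemma cheb:
  assumes "finite A" "B \<subseteq> A"
  shows "(\<Sum>u\<in>Ls A d. (int (card A) * int (cnt B u) - int d * int (card B))^2)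
      = int d * int (card B) * (int (card A) - int (card B)) * int (card A) ^ d"
proof (induction d)
  case 0 then show ?case by (simp add: Ls_0 cnt_def)
next
  case (Suc d)
  define m where "m = int (card A)"
  define b where "b = int (card B)"
  define D where "D u = m * int (cnt B u) - int d * b" for u
  define e where "e x = (if x \<in> B then m - b else - b)" for x
  have fB: "finite B" using assms finite_subset by auto
  have cAB: "card (A - B) = card A - card B" using assms fB by (simp add: card_Diff_subset)
  have cBA: "card B \<le> card A" using assms by (simp add: card_mono)
  have AB: "A \<inter> {x. x \<in> B} = B" "A \<inter> - {x. x \<in> B} = A - B" "A \<inter> B = B" "A \<inter> - B = A - B" using assms by auto
  have se: "(\<Sum>x\<in>A. e x) = 0"
    unfolding e_def using assms(1) cAB cBA by (simp add: sum.If_cases AB m_def b_def of_nat_diff algebra_simps)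
  have "(\<Sum>x\<in>A. (e x)^2) = (\<Sum>x\<in>A. if x \<in> B then (m - b)^2 else b^2)"
    by (rule sum.cong) (auto simp: e_def)
  also have "\<dots> = b * (m - b)^2 + (m - b) * b^2"
    using assms(1) cAB cBA by (simp add: sum.If_cases AB m_def b_def of_nat_diff)
  also have "\<dots> = m * b * (m - b)" by (simp add: power2_eq_square algebra_simps)
  finally have se2: "(\<Sum>x\<in>A. (e x)^2) = m * b * (m - b)" .
  have step: "(m * int (cnt B (x # u)) - int (Suc d) * b) = D u + e x" for x u
    unfolding D_def e_def cnt_def by (auto simp: algebra_simps)
  have "(\<Sum>u\<in>Ls A (Suc d). (m * int (cnt B u) - int (Suc d) * b)^2)
      = (\<Sum>x\<in>A. \<Sum>u\<in>Ls A d. (D u + e x)^2)"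
    by (subst sum_Ls_Suc[OF assms(1)]) (simp only: step)
  also have "\<dots> = (\<Sum>x\<in>A. (\<Sum>u\<in>Ls A d. (D u)^2) + 2 * e x * (\<Sum>u\<in>Ls A d. D u) + (e x)^2 * card (Ls A d))"
    by (simp add: power2_eq_square algebra_simps sum.distrib sum_distrib_left)
  also have "\<dots> = m * (\<Sum>u\<in>Ls A d. (D u)^2) + 2 * (\<Sum>x\<in>A. e x) * (\<Sum>u\<in>Ls A d. D u) + (\<Sum>x\<in>A. (e x)^2) * card (Ls A d)"
    by (simp add: sum.distrib sum_distrib_left sum_distrib_right m_def algebra_simps)
  also have "\<dots> = m * (int d * b * (m - b) * m ^ d) + m * b * (m - b) * m ^ d"
    using Suc se se2 card_Ls[OF assms(1), of d] unfolding D_def m_def b_def by simp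
  also have "\<dots> = int (Suc d) * b * (m - b) * m ^ Suc d" by (simp add: algebra_simps)
  finally show ?case unfolding m_def b_def .
qed

definition S1 :: "(int \<times> int) set" where "S1 = {(1, 1)}"
definition S2 :: "nat \<Rightarrow> (int \<times> int) set" where "S2 n = {(int n, -1)}"
definition Pk :: "nat \<Rightarrow> int \<Rightarrow> (int \<times> int) set" where "Pk n k = {(k, 0), (int n + 1 - k, 0)}"
definition fam :: "nat \<Rightarrow> (int \<times> int) set set" where
  "fam n = insert S1 (insert (S2 n) (Pk n ` {1..int n}))"
definition dev :: "nat \<Rightarrow> (int \<times> int) set \<Rightarrow> (int \<times> int) list \<Rightarrow> int" where
  "dev n B u = int (n + 2) * int (cnt B u) - int (length u) * int (card B)"
definition good :: "nat \<Rightarrow> (int \<times> int) list \<Rightarrow> bool" where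
  "good n u \<longleftrightarrow> (\<forall>B\<in>fam n. 8 * \<bar>dev n B u\<bar> < int (length u))"

lemma Wd_Ls: "Wd n d = Ls (Al n) d" unfolding Wd_def Ls_def by simp

lemma fam_sub: assumes "n \<ge> 1" "B \<in> fam n" shows "B \<subseteq> Al n"
  using assms unfolding fam_def S1_def S2_def Pk_def Al_def by auto

lemma card_fam: "card (fam n) \<le> n + 2"
proof -
  have "card (fam n) \<le> Suc (Suc (card (Pk n ` {1..int n})))"
  proof -
    have f: "finite (Pk n ` {1..int n})" by simp
    have "card (insert (S2 n) (Pk n ` {1..int n})) \<le> Suc (card (Pk n ` {1..int n}))"
      using f by (simp add: card_insert_if)
    moreover have "card (fam n) \<le> Suc (card (insert (S2 n) (Pk n ` {1..int n})))"
      unfolding fam_def using f by (simp add: card_insert_if)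
    ultimately show ?thesis by simp
  qed
  also have "card (Pk n ` {1..int n}) \<le> n" using card_image_le[of "{1..int n}" "Pk n"] by simp
  finally show ?thesis by simp
qed

lemma finite_fam: "finite (fam n)" unfolding fam_def by simp

lemma bad_one:
  assumes "n \<ge> 2" "B \<subseteq> Al n" "d > 0"
  shows "int (card {u \<in> Wd n d. int d \<le> 8 * \<bar>dev n B u\<bar>}) * int d \<le> 64 * int (n + 2) ^ 2 * int (n + 2) ^ d"
proof -
  define m where "m = n + 2"
  have cA: "card (Al n) = m" using card_Al[OF assms(1)] m_def by simp
  have fA: "finite (Al n)" by (rule finite_Al)
  define Bad where "Bad = {u \<in> Wd n d. int d \<le> 8 * \<bar>dev n B u\<bar>}"
  have dv: "dev n B u = int (card (Al n)) * int (cnt B u) - int d * int (card B)" if "u \<in> Wd n d" for u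
    using that unfolding dev_def Wd_def cA m_def by simp
  have fW: "finite (Wd n d)" unfolding Wd_Ls by (rule finite_Ls[OF fA])
  have cB: "card B \<le> m" using card_mono[OF fA assms(2)] cA by simp
  have "int (card Bad) * (int d)^2 = (\<Sum>u\<in>Bad. (int d)^2)" by simp
  also have "\<dots> \<le> (\<Sum>u\<in>Bad. 64 * (dev n B u)^2)"
  proof (rule sum_mono)
    fix u assume "u \<in> Bad"
    then have "int d \<le> 8 * \<bar>dev n B u\<bar>" unfolding Bad_def by auto
    then have "(int d)^2 \<le> (8 * \<bar>dev n B u\<bar>)^2" by (intro power_mono) auto
    then show "(int d)^2 \<le> 64 * (dev n B u)^2" by (simp add: power_mult_distrib)
  qed
  also have "\<dots> \<le> (\<Sum>u\<in>Wd n d. 64 * (dev n B u)^2)"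
    using fW by (intro sum_mono2) (auto simp: Bad_def)
  also have "\<dots> = 64 * (\<Sum>u\<in>Wd n d. (int (card (Al n)) * int (cnt B u) - int d * int (card B))^2)"
    by (simp add: sum_distrib_left dv)
  also have "\<dots> = 64 * (int d * int (card B) * (int m - int (card B)) * int m ^ d)"
    unfolding Wd_Ls using cheb[OF fA assms(2), of d] cA by simp
  also have "\<dots> \<le> 64 * (int d * int m * int m * int m ^ d)"
  proof -
    have "int (card B) * (int m - int (card B)) \<le> int m * int m"
      using cB by (intro mult_mono) auto
    then have "int d * (int (card B) * (int m - int (card B))) * int m ^ d \<le> int d * (int m * int m) * int m ^ d"
      by (intro mult_left_mono mult_right_mono) auto
    then show ?thesis by (simp add: algebra_simps)
  qed
  finally have "int (card Bad) * int d * int d \<le> (64 * int m ^ 2 * int m ^ d) * int d"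
    by (simp add: power2_eq_square algebra_simps)
  then have "int (card Bad) * int d \<le> 64 * int m ^ 2 * int m ^ d"
    using assms(3) by (simp add: mult_le_cancel_right)
  then show ?thesis unfolding Bad_def m_def by simp
qed

lemma bad_all:
  assumes "n \<ge> 2" "d > 0"
  shows "int (card {u \<in> Wd n d. \<not> good n u}) * int d \<le> int (n + 2) * (64 * int (n + 2) ^ 2 * int (n + 2) ^ d)"
proof -
  have fA: "finite (Al n)" by (rule finite_Al)
  have fW: "finite (Wd n d)" unfolding Wd_Ls by (rule finite_Ls[OF fA])
  have sub: "{u \<in> Wd n d. \<not> good n u} \<subseteq> (\<Union>B\<in>fam n. {u \<in> Wd n d. int d \<le> 8 * \<bar>dev n B u\<bar>})"
    unfolding good_def Wd_def by auto
  have "card {u \<in> Wd n d. \<not> good n u} \<le> card (\<Union>B\<in>fam n. {u \<in> Wd n d. int d \<le> 8 * \<bar>dev n B u\<bar>})"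
    using fW finite_fam by (intro card_mono[OF _ sub]) auto
  also have "\<dots> \<le> (\<Sum>B\<in>fam n. card {u \<in> Wd n d. int d \<le> 8 * \<bar>dev n B u\<bar>})"
    by (rule card_UN_le[OF finite_fam])
  finally have h: "card {u \<in> Wd n d. \<not> good n u} \<le> (\<Sum>B\<in>fam n. card {u \<in> Wd n d. int d \<le> 8 * \<bar>dev n B u\<bar>})" .
  have "int (card {u \<in> Wd n d. \<not> good n u}) * int d
      \<le> (\<Sum>B\<in>fam n. int (card {u \<in> Wd n d. int d \<le> 8 * \<bar>dev n B u\<bar>}) * int d)"
  proof -
    have "int (card {u \<in> Wd n d. \<not> good n u}) \<le> (\<Sum>B\<in>fam n. int (card {u \<in> Wd n d. int d \<le> 8 * \<bar>dev n B u\<bar>}))"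
      using h by (simp flip: of_nat_sum)
    then have "int (card {u \<in> Wd n d. \<not> good n u}) * int d \<le> (\<Sum>B\<in>fam n. int (card {u \<in> Wd n d. int d \<le> 8 * \<bar>dev n B u\<bar>})) * int d"
      by (rule mult_right_mono) simp
    then show ?thesis by (simp add: sum_distrib_right)
  qed
  also have "\<dots> \<le> (\<Sum>B\<in>fam n. 64 * int (n + 2) ^ 2 * int (n + 2) ^ d)"
    using bad_one[OF assms(1) _ assms(2)] fam_sub assms(1) by (intro sum_mono) auto
  also have "\<dots> = int (card (fam n)) * (64 * int (n + 2) ^ 2 * int (n + 2) ^ d)" by simp
  also have "\<dots> \<le> int (n + 2) * (64 * int (n + 2) ^ 2 * int (n + 2) ^ d)"
    using card_fam[of n] by (intro mult_right_mono) (linarith, simp)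
  finally show ?thesis .
qed

lemma cnt_Cons: "cnt B (z # u) = (if z \<in> B then Suc (cnt B u) else cnt B u)"
  unfolding cnt_def by simp

lemma cnt_Nil[simp]: "cnt B [] = 0" unfolding cnt_def by simp

lemma cnt_Un: "A \<inter> B = {} \<Longrightarrow> cnt (A \<union> B) u = cnt A u + cnt B u"
  by (induction u) (auto simp: cnt_Cons)

lemma prod_sign: "prod_list (map (\<lambda>z. if z \<in> S then -1 else (1::int)) u) = (-1) ^ cnt S u"
  by (induction u) (auto simp: cnt_Cons)

lemma card_filter_sum: "finite W \<Longrightarrow> int (card {u \<in> W. P u}) = (\<Sum>u\<in>W. if P u then 1 else 0)"
  by (simp add: sum.inter_filter[symmetric])

lemma odd_count:
  assumes "n \<ge> 2"
  shows "2 * int (card {u \<in> Wd n d. odd (cnt S1 u + cnt (S2 n) u)}) = int (n + 2) ^ d - (int n - 2) ^ d"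
proof -
  define S where "S = S1 \<union> S2 n"
  define g where "g z = (if z \<in> S then -1 else (1::int))" for z
  have fA: "finite (Al n)" by (rule finite_Al)
  have fW: "finite (Wd n d)" unfolding Wd_Ls by (rule finite_Ls[OF fA])
  have dj: "S1 \<inter> S2 n = {}" unfolding S1_def S2_def by auto
  have c: "cnt S u = cnt S1 u + cnt (S2 n) u" for u unfolding S_def using cnt_Un[OF dj] by simp
  have SA: "S \<subseteq> Al n" "card S = 2" unfolding S_def S1_def S2_def Al_def using assms by auto
  have "(\<Sum>z\<in>Al n. g z) = (\<Sum>z\<in>Al n. 1 - 2 * (if z \<in> S then 1 else 0))"
    by (rule sum.cong) (auto simp: g_def)
  also have "\<dots> = int (card (Al n)) - 2 * int (card {z \<in> Al n. z \<in> S})"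
    using fA by (simp add: sum_subtractf sum_distrib_left card_filter_sum)
  also have "{z \<in> Al n. z \<in> S} = S" using SA by auto
  finally have sg: "(\<Sum>z\<in>Al n. g z) = int n - 2" using SA card_Al[OF assms] by simp
  have "(\<Sum>u\<in>Wd n d. (-1::int) ^ cnt S u) = (int n - 2) ^ d"
    using sum_prod_Ls[OF fA, of g d] sg unfolding Wd_Ls g_def prod_sign by simp
  moreover have "(-1::int) ^ cnt S u = (if even (cnt S u) then 1 else 0) - (if odd (cnt S u) then 1 else 0)" for u
    by simp
  moreover have "int (card (Wd n d)) = (\<Sum>u\<in>Wd n d. (if even (cnt S u) then 1 else 0) + (if odd (cnt S u) then 1 else 0))"
  proof -
    have "\<And>u. (if even (cnt S u) then 1 else 0) + (if odd (cnt S u) then 1 else 0) = (1::int)" by auto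
    then show ?thesis by simp
  qed
  ultimately have "int (card (Wd n d)) - (int n - 2) ^ d = 2 * (\<Sum>u\<in>Wd n d. if odd (cnt S u) then 1 else 0)"
    by (simp add: sum.distrib sum_subtractf)
  moreover have "card (Wd n d) = (n + 2) ^ d" unfolding Wd_Ls using card_Ls[OF fA] card_Al[OF assms] by simp
  ultimately show ?thesis using card_filter_sum[OF fW, of "\<lambda>u. odd (cnt S u)"] unfolding c by simp
qed

definition nzw :: "(int \<times> int) list \<Rightarrow> bool" where "nzw u \<longleftrightarrow> (\<exists>z\<in>set u. snd z \<noteq> 0)"

lemma nz_count:
  assumes "n \<ge> 2"
  shows "int (card {u \<in> Wd n d. nzw u}) \<ge> int (n + 2) ^ d - int n ^ d"
proof -
  have fA: "finite (Al n)" by (rule finite_Al)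
  have fW: "finite (Wd n d)" unfolding Wd_Ls by (rule finite_Ls[OF fA])
  define C where "C = (\<lambda>c. (c, 0::int)) ` {1..int n}"
  have cC: "card C = n" unfolding C_def by (subst card_image) (auto simp: inj_on_def)
  have sub: "{u \<in> Wd n d. \<not> nzw u} \<subseteq> Ls C d"
    unfolding Wd_def Ls_def nzw_def C_def Al_def by force
  have "card {u \<in> Wd n d. \<not> nzw u} \<le> n ^ d"
    using card_mono[OF finite_Ls sub] card_Ls[of C d] cC unfolding C_def by auto
  moreover have "card (Wd n d) = card {u \<in> Wd n d. nzw u} + card {u \<in> Wd n d. \<not> nzw u}"
    using fW by (subst card_Un_disjoint[symmetric]) (auto intro: arg_cong[where f = card])
  moreover have "card (Wd n d) = (n + 2) ^ d" unfolding Wd_Ls using card_Ls[OF fA] card_Al[OF assms] by simp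
  ultimately have h: "(n + 2) ^ d \<le> card {u \<in> Wd n d. nzw u} + n ^ d" by linarith
  have "int ((n + 2) ^ d) \<le> int (card {u \<in> Wd n d. nzw u}) + int (n ^ d)"
    using h by (metis of_nat_add of_nat_le_iff)
  then show ?thesis by simp
qed

definition flipz :: "nat \<Rightarrow> int \<times> int \<Rightarrow> int \<times> int" where
  "flipz n z = (if snd z = 0 then fst z else int n + 1 - fst z, - snd z)"

definition canon :: "(int \<times> int) list \<Rightarrow> bool" where
  "canon u \<longleftrightarrow> hd (filter (\<lambda>x. x \<noteq> 0) (map snd u)) = 1"

lemma flipz_flipz[simp]: "flipz n (flipz n z) = z"
  unfolding flipz_def by (cases z) auto

lemma inj_flipz: "inj (flipz n)"
  by (metis flipz_flipz injI)

lemma flipz_mem: "flipz n z \<in> B \<longleftrightarrow> z \<in> flipz n ` B"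
  by (metis flipz_flipz image_iff)

lemma cnt_flip: "cnt B (map (flipz n) u) = cnt (flipz n ` B) u"
  unfolding cnt_def by (simp add: filter_map comp_def flipz_mem)

lemma flipz_Al: "z \<in> Al n \<Longrightarrow> flipz n z \<in> Al n"
  unfolding Al_def flipz_def by auto

lemma flip_S1: "flipz n ` S1 = S2 n" unfolding S1_def S2_def flipz_def by auto
lemma flip_S2: "flipz n ` S2 n = S1" unfolding S1_def S2_def flipz_def by auto
lemma flip_Pk: "flipz n ` Pk n k = Pk n k" unfolding Pk_def flipz_def by auto

lemma flip_fam:
  assumes "B \<in> fam n" shows "flipz n ` B \<in> fam n"
proof -
  have "B = S1 \<or> B = S2 n \<or> (\<exists>k\<in>{1..int n}. B = Pk n k)" using assms unfolding fam_def by auto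
  moreover have "S1 \<in> fam n" "S2 n \<in> fam n" "\<And>k. k \<in> {1..int n} \<Longrightarrow> Pk n k \<in> fam n" unfolding fam_def by auto
  ultimately show ?thesis using flip_S1 flip_S2 flip_Pk by metis
qed

lemma card_flip: "card (flipz n ` B) = card B"
  by (rule card_image[OF inj_on_subset[OF inj_flipz subset_UNIV]])

lemma good_flip: "good n u \<Longrightarrow> good n (map (flipz n) u)"
  unfolding good_def dev_def cnt_flip card_flip[symmetric]
  using flip_fam by (metis length_map card_flip)

lemma flip_Wd: "u \<in> Wd n d \<Longrightarrow> map (flipz n) u \<in> Wd n d"
  unfolding Wd_def using flipz_Al by auto

lemma flip_nzw: "nzw (map (flipz n) u) = nzw u"
  unfolding nzw_def flipz_def by auto

lemma flip_odd: "cnt S1 (map (flipz n) u) + cnt (S2 n) (map (flipz n) u) = cnt S1 u + cnt (S2 n) u"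
  unfolding cnt_flip flip_S1 flip_S2 by simp

lemma canon_flip:
  assumes "u \<in> Wd n d" "nzw u"
  shows "canon (map (flipz n) u) \<longleftrightarrow> \<not> canon u"
proof -
  have ms: "map snd (map (flipz n) u) = map uminus (map snd u)"
    unfolding flipz_def by simp
  have fl: "filter (\<lambda>x. x \<noteq> 0) (map uminus vs) = map uminus (filter (\<lambda>x. x \<noteq> (0::int)) vs)" for vs
    by (induction vs) auto
  define vs where "vs = filter (\<lambda>x. x \<noteq> 0) (map snd u)"
  have ne: "vs \<noteq> []" using assms(2) unfolding vs_def nzw_def by (auto simp: filter_empty_conv)
  have "hd vs \<in> set vs" using ne by simp
  then have "hd vs \<in> {-1, 1}" using assms(1) unfolding vs_def Wd_def Al_def by auto
  moreover have "hd (map uminus vs) = - hd vs" using ne by (simp add: hd_map)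
  ultimately show ?thesis unfolding canon_def ms fl vs_def[symmetric] by auto
qed

lemma flip_half:
  assumes "GW \<subseteq> Wd n d" "\<And>u. u \<in> GW \<Longrightarrow> map (flipz n) u \<in> GW" "\<And>u. u \<in> GW \<Longrightarrow> nzw u"
  shows "2 * card {u \<in> GW. canon u} = card GW"
proof -
  have fW: "finite (Wd n d)" unfolding Wd_Ls by (rule finite_Ls[OF finite_Al])
  have fG: "finite GW" using finite_subset[OF assms(1) fW] .
  define C where "C = {u \<in> GW. canon u}"
  define D where "D = {u \<in> GW. \<not> canon u}"
  have inj: "inj_on (map (flipz n)) C"
    by (rule inj_onI) (metis map_map flipz_flipz comp_def map_idI)
  have "map (flipz n) ` C = D"
  proof (intro set_eqI iffI)
    fix x assume "x \<in> map (flipz n) ` C"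
    then obtain u where u: "u \<in> C" "x = map (flipz n) u" by auto
    then show "x \<in> D" unfolding C_def D_def using assms canon_flip by blast
  next
    fix x assume x: "x \<in> D"
    have "map (flipz n) (map (flipz n) x) = x" by (simp add: comp_def)
    moreover have "map (flipz n) x \<in> C" using x assms canon_flip unfolding C_def D_def by blast
    ultimately show "x \<in> map (flipz n) ` C" by (metis image_eqI)
  qed
  then have "card D = card C" using card_image[OF inj] by simp
  moreover have "card GW = card C + card D"
    unfolding C_def D_def using fG by (subst card_Un_disjoint[symmetric]) (auto intro: arg_cong[where f = card])
  ultimately show ?thesis unfolding C_def by simp
qed

definition Ecnt :: "nat \<Rightarrow> int \<Rightarrow> int list \<Rightarrow> nat" where
  "Ecnt n k x = length (filter (\<lambda>c. c = k \<or> c = int n + 1 - k) x)"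
definition k0 :: "nat \<Rightarrow> int list \<Rightarrow> nat" where
  "k0 n x = (LEAST k::nat. 1 \<le> k \<and> 19 * int (length x) \<le> 8 * int (n + 2) * int (Ecnt n (int k) x))"
definition nL :: "nat \<Rightarrow> int list \<Rightarrow> nat" where
  "nL n x = length (filter (\<lambda>c. 2 * c < int n + 1) x)"
definition dec :: "nat \<Rightarrow> int list \<Rightarrow> nat" where
  "dec n x = (if even (nL n x) then k0 n x else n + 1 - k0 n x)"
definition G0 :: "'a list \<Rightarrow> int list \<Rightarrow> 'a" where
  "G0 w x = w ! (dec (length w) x - 1)"

lemma pt_Cons: "pt (z # u) t = (fst z + t * snd z) # pt u t"
  unfolding pt_def by (cases z) auto

lemma pt_len: "length (pt u t) = length u" unfolding pt_def by simp

lemma count_pt: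
  assumes "set u \<subseteq> Al n"
  shows "length (filter P (pt u (int i))) = length (filter (\<lambda>z. snd z = 0 \<and> P (fst z)) u)
     + (if P (1 + int i) then cnt S1 u else 0) + (if P (int n - int i) then cnt (S2 n) u else 0)"
  using assms
proof (induction u)
  case Nil then show ?case by (simp add: pt_def)
next
  case (Cons z u)
  then have IH: "length (filter P (pt u (int i))) = length (filter (\<lambda>z. snd z = 0 \<and> P (fst z)) u)
     + (if P (1 + int i) then cnt S1 u else 0) + (if P (int n - int i) then cnt (S2 n) u else 0)" by simp
  from Cons.prems have "z \<in> Al n" by simp
  then show ?case
  proof (cases rule: AlE)
    case (1 c) then show ?thesis using IH by (simp add: pt_Cons cnt_Cons S1_def S2_def)
  next
    case 2 then show ?thesis using IH by (simp add: pt_Cons cnt_Cons S1_def S2_def)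
  next
    case 3 then show ?thesis using IH by (simp add: pt_Cons cnt_Cons S1_def S2_def)
  qed
qed

lemma card_Pk: "card (Pk n k) = (if k = int n + 1 - k then 1 else 2)"
proof (cases "k = int n + 1 - k")
  case True
  then have "Pk n k = {(k, 0)}" unfolding Pk_def using True[symmetric] by simp
  then show ?thesis using True by simp
next
  case False then show ?thesis unfolding Pk_def by auto
qed

lemma abs8: "8 * \<bar>a::int\<bar> < D \<Longrightarrow> - D < 8 * a \<and> 8 * a < D"
  by (cases "a \<ge> 0") auto

lemma ar1: "- D < 8 * X - 8 * Y \<Longrightarrow> - D < 8 * S - 8 * D \<Longrightarrow> - D < 8 * T - 8 * D \<Longrightarrow> D \<le> Y
  \<Longrightarrow> 0 < D \<Longrightarrow> 19 * D \<le> 8 * X + 8 * S + 8 * (T::int)"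
  by linarith

lemma ar2: "8 * X - 8 * Y < D \<Longrightarrow> Y \<le> 2 * D \<Longrightarrow> 0 < D \<Longrightarrow> 19 * D \<le> 8 * (X::int) \<Longrightarrow> False"
  by linarith

lemma decode:
  assumes n2: "n \<ge> 2" and uW: "u \<in> Wd n d" and g: "good n u" and nz: "nzw u" and i: "i < n"
  shows "k0 n (pt u (int i)) = min (i + 1) (n - i)"
    "nL n (pt u (int i)) = length (filter (\<lambda>z. snd z = 0 \<and> 2 * fst z < int n + 1) u)
       + (if 2 * (1 + int i) < int n + 1 then cnt S1 u else 0) + (if 2 * (int n - int i) < int n + 1 then cnt (S2 n) u else 0)"
proof -
  define x where "x = pt u (int i)"
  have A: "set u \<subseteq> Al n" and ld: "length u = d" using uW unfolding Wd_def by auto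
  have lx: "length x = d" unfolding x_def pt_len ld ..
  have dpos: "d > 0" using nz ld unfolding nzw_def by (cases u) auto
  define m where "m = int (n + 2)"
  define s where "s = int (cnt S1 u)"
  define t where "t = int (cnt (S2 n) u)"
  define D where "D = int d"
  have gs: "8 * \<bar>m * s - D\<bar> < D" using g unfolding good_def fam_def dev_def m_def s_def D_def ld S1_def by auto
  have gt: "8 * \<bar>m * t - D\<bar> < D" using g unfolding good_def fam_def dev_def m_def t_def D_def ld S2_def by auto
  have gk: "8 * \<bar>m * int (cnt (Pk n k) u) - D * int (card (Pk n k))\<bar> < D" if "1 \<le> k" "k \<le> int n" for k
    using g that unfolding good_def fam_def dev_def m_def D_def ld by auto
  have cPk: "1 \<le> card (Pk n k)" "card (Pk n k) \<le> 2" for k unfolding card_Pk by auto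
  have E: "int (Ecnt n k x) = int (cnt (Pk n k) u) + (if k = 1 + int i \<or> k = int n - int i then s + t else 0)"
    for k
  proof -
    have "Ecnt n k x = length (filter (\<lambda>z. snd z = 0 \<and> (fst z = k \<or> fst z = int n + 1 - k)) u)
      + (if 1 + int i = k \<or> 1 + int i = int n + 1 - k then cnt S1 u else 0)
      + (if int n - int i = k \<or> int n - int i = int n + 1 - k then cnt (S2 n) u else 0)"
      unfolding Ecnt_def x_def by (rule count_pt[OF A])
    moreover have "filter (\<lambda>z. snd z = 0 \<and> (fst z = k \<or> fst z = int n + 1 - k)) u = filter (\<lambda>z. z \<in> Pk n k) u"
      by (rule filter_cong) (auto simp: Pk_def)
    ultimately show ?thesis unfolding s_def t_def cnt_def by auto
  qed
  define \<mu> where "\<mu> = min (i + 1) (n - i)"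
  have mu: "1 \<le> \<mu>" "\<mu> \<le> n" "int \<mu> = 1 + int i \<or> int \<mu> = int n - int i" unfolding \<mu>_def using i by auto
  have Qmu: "1 \<le> \<mu> \<and> 19 * int (length x) \<le> 8 * int (n + 2) * int (Ecnt n (int \<mu>) x)"
  proof -
    have e: "int (Ecnt n (int \<mu>) x) = int (cnt (Pk n (int \<mu>)) u) + s + t" using E[of "int \<mu>"] mu by auto
    have k: "8 * \<bar>m * int (cnt (Pk n (int \<mu>)) u) - D * int (card (Pk n (int \<mu>)))\<bar> < D"
      using gk[of "int \<mu>"] mu by auto
    have c1: "D \<le> D * int (card (Pk n (int \<mu>)))" using cPk[of "int \<mu>"] dpos unfolding D_def by simp
    have "19 * D \<le> 8 * (m * int (cnt (Pk n (int \<mu>)) u) + m * s + m * t)"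
      using ar1[OF abs8[OF k, THEN conjunct1, unfolded right_diff_distrib]
         abs8[OF gs, THEN conjunct1, unfolded right_diff_distrib]
         abs8[OF gt, THEN conjunct1, unfolded right_diff_distrib] c1] dpos
      unfolding D_def by (simp add: algebra_simps)
    then show ?thesis using mu(1) unfolding e lx m_def D_def by (simp add: algebra_simps)
  qed
  have notQ: "\<not> (1 \<le> k \<and> 19 * int (length x) \<le> 8 * int (n + 2) * int (Ecnt n (int k) x))" if "k < \<mu>" for k
  proof
    assume h: "1 \<le> k \<and> 19 * int (length x) \<le> 8 * int (n + 2) * int (Ecnt n (int k) x)"
    have kn: "1 \<le> int k" "int k \<le> int n" using h that mu by auto
    have "\<not> (int k = 1 + int i \<or> int k = int n - int i)" using that unfolding \<mu>_def by auto
    then have e: "int (Ecnt n (int k) x) = int (cnt (Pk n (int k)) u)" using E[of "int k"] by simp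
    have k: "8 * \<bar>m * int (cnt (Pk n (int k)) u) - D * int (card (Pk n (int k)))\<bar> < D"
      using gk kn by auto
    have c2: "D * int (card (Pk n (int k))) \<le> 2 * D" using cPk[of "int k"] dpos unfolding D_def by simp
    have "19 * D \<le> 8 * (m * int (cnt (Pk n (int k)) u))" using h unfolding e lx m_def D_def by (simp add: algebra_simps)
    then show False using ar2[OF abs8[OF k, THEN conjunct2, unfolded right_diff_distrib] c2] dpos unfolding D_def by simp
  qed
  show "k0 n (pt u (int i)) = min (i + 1) (n - i)"
    unfolding k0_def x_def[symmetric] \<mu>_def[symmetric]
  proof (rule Least_equality)
    show "1 \<le> \<mu> \<and> 19 * int (length x) \<le> 8 * int (n + 2) * int (Ecnt n (int \<mu>) x)" by (rule Qmu)
  next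
    fix k assume "1 \<le> k \<and> 19 * int (length x) \<le> 8 * int (n + 2) * int (Ecnt n (int k) x)"
    then show "\<mu> \<le> k" using notQ by (meson not_le)
  qed
  show "nL n (pt u (int i)) = length (filter (\<lambda>z. snd z = 0 \<and> 2 * fst z < int n + 1) u)
       + (if 2 * (1 + int i) < int n + 1 then cnt S1 u else 0) + (if 2 * (int n - int i) < int n + 1 then cnt (S2 n) u else 0)"
    unfolding nL_def by (rule count_pt[OF A])
qed

lemma dec_val:
  assumes n2: "n \<ge> 2" and uW: "u \<in> Wd n d" and g: "good n u" and nz: "nzw u" and i: "i < n"
  defines "Lc \<equiv> length (filter (\<lambda>z. snd z = 0 \<and> 2 * fst z < int n + 1) u)"
  shows "dec n (pt u (int i)) = i + 1 \<or> dec n (pt u (int i)) = n - i"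
    "even (Lc + cnt S1 u) \<Longrightarrow> odd (Lc + cnt (S2 n) u) \<Longrightarrow> dec n (pt u (int i)) = i + 1"
    "odd (Lc + cnt S1 u) \<Longrightarrow> even (Lc + cnt (S2 n) u) \<Longrightarrow> dec n (pt u (int i)) = n - i"
proof -
  note D = decode[OF n2 uW g nz i]
  define s where "s = cnt S1 u"
  define t where "t = cnt (S2 n) u"
  have dv: "dec n (pt u (int i)) = (if 2 * (1 + int i) < int n + 1 then (if even (Lc + s) then i + 1 else n - i)
     else if 2 * (int n - int i) < int n + 1 then (if even (Lc + t) then n - i else i + 1) else i + 1)"
  proof -
    have dd: "dec n (pt u (int i)) = (if even (Lc + (if 2 * (1 + int i) < int n + 1 then s else 0) + (if 2 * (int n - int i) < int n + 1 then t else 0))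
      then min (i + 1) (n - i) else n + 1 - min (i + 1) (n - i))"
      unfolding dec_def D Lc_def s_def t_def by simp
    consider (a) "2 * (1 + int i) < int n + 1" | (b) "\<not> 2 * (1 + int i) < int n + 1" "2 * (int n - int i) < int n + 1"
      | (c) "\<not> 2 * (1 + int i) < int n + 1" "\<not> 2 * (int n - int i) < int n + 1" by blast
    then show ?thesis
    proof cases
      case a
      have "2 * int i + 1 < int n" using a by (simp add: algebra_simps)
      then have h: "\<not> 2 * (int n - int i) < int n + 1" "min (i + 1) (n - i) = i + 1" "n + 1 - (i + 1) = n - i"
        using i by (simp_all add: algebra_simps)
      show ?thesis using a dd h by simp
    next
      case b
      have "2 * int i + 1 > int n" using b by (simp add: algebra_simps)
      then have h: "min (i + 1) (n - i) = n - i" "n + 1 - (n - i) = i + 1" using i by simp_all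
      show ?thesis using b dd h by simp
    next
      case c
      have "2 * int i + 1 = int n" using c by (simp add: algebra_simps)
      then have "2 * i + 1 = n" by linarith
      then have h: "min (i + 1) (n - i) = i + 1" "n + 1 - (i + 1) = i + 1" by auto
      show ?thesis using c dd h by simp
    qed
  qed
  show "dec n (pt u (int i)) = i + 1 \<or> dec n (pt u (int i)) = n - i"
    unfolding dv by simp
  show "dec n (pt u (int i)) = i + 1" if e: "even (Lc + cnt S1 u)" and o: "odd (Lc + cnt (S2 n) u)"
  proof -
    have e': "even (Lc + s) = True" and o': "even (Lc + t) = False" using e o unfolding s_def t_def by simp_all
    show ?thesis by (simp only: dv e' o' if_True if_False if_cancel)
  qed
  show "dec n (pt u (int i)) = n - i" if e: "odd (Lc + cnt S1 u)" and o: "even (Lc + cnt (S2 n) u)"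
  proof -
    have e': "even (Lc + s) = False" and o': "even (Lc + t) = True" using e o unfolding s_def t_def by simp_all
    have mid: "i + 1 = n - i" if "\<not> 2 * (1 + int i) < int n + 1" "\<not> 2 * (int n - int i) < int n + 1"
    proof -
      have "2 * int i + 1 = int n" using that by (simp add: algebra_simps)
      then show ?thesis by linarith
    qed
    show ?thesis unfolding dv e' o' if_True if_False using mid by auto
  qed
qed

lemma par3: "(even (L + s) \<and> odd (L + t)) \<or> (odd (L + s) \<and> even (L + t)) \<or> even (s + (t::nat))"
  by auto

lemma reading:
  assumes n: "n = length w" and n2: "n \<ge> 2" and uW: "u \<in> Wd n d" and g: "good n u" and nz: "nzw u"
    and q: "(\<forall>i<n. w ! i = w ! (n - 1 - i)) \<or> odd (cnt S1 u + cnt (S2 n) u)"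
  defines "r \<equiv> map (\<lambda>i. G0 w (pt u (int i))) [0..<n]"
  shows "r = w \<or> rev r = w"
proof -
  define Lc where "Lc = length (filter (\<lambda>z. snd z = 0 \<and> 2 * fst z < int n + 1) u)"
  note DV = dec_val[OF n2 uW g nz, folded Lc_def]
  have lr: "length r = n" unfolding r_def by simp
  have rn: "r ! i = w ! (dec n (pt u (int i)) - 1)" if "i < n" for i
    unfolding r_def G0_def using that n by simp
  have v1: "w ! (dec n (pt u (int i)) - 1) = w ! i \<or> w ! (dec n (pt u (int i)) - 1) = w ! (n - 1 - i)" if "i < n" for i
    using DV(1)[OF that] by (elim disjE) (simp_all add: diff_right_commute)
  consider "even (Lc + cnt S1 u) \<and> odd (Lc + cnt (S2 n) u)" | "odd (Lc + cnt S1 u) \<and> even (Lc + cnt (S2 n) u)"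
    | "even (cnt S1 u + cnt (S2 n) u)" using par3[of Lc "cnt S1 u" "cnt (S2 n) u"] by blast
  then show ?thesis
  proof cases
    case 1
    have "r ! i = w ! i" if "i < n" for i
    proof -
      have "dec n (pt u (int i)) = i + 1" using DV(2)[OF that] 1 by blast
      then show ?thesis using rn[OF that] by simp
    qed
    then have "r = w" using lr n by (intro nth_equalityI) auto
    then show ?thesis ..
  next
    case 2
    have "r ! i = rev w ! i" if "i < n" for i
    proof -
      have "dec n (pt u (int i)) = n - i" using DV(3)[OF that] 2 by blast
      moreover have "n - i - 1 = n - Suc i" by simp
      ultimately show ?thesis using that n rn[OF that] by (simp add: rev_nth)
    qed
    then have "r = rev w" using lr n by (intro nth_equalityI) auto
    then show ?thesis by simp
  next
    case 3
    then have pal: "\<forall>i<n. w ! i = w ! (n - 1 - i)" using q by blast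
    have "r ! i = w ! i" if "i < n" for i
    proof -
      have "w ! i = w ! (n - 1 - i)" using pal that by blast
      then have e: "w ! (n - 1 - i) = w ! i" by (rule sym)
      show ?thesis using v1[OF that]
      proof
        assume "w ! (dec n (pt u (int i)) - 1) = w ! i" then show ?thesis using rn[OF that] by simp
      next
        assume "w ! (dec n (pt u (int i)) - 1) = w ! (n - 1 - i)" then show ?thesis using rn[OF that] e by simp
      qed
    qed
    then have "r = w" using lr n by (intro nth_equalityI) auto
    then show ?thesis ..
  qed
qed

lemma pt_mono:
  assumes "canon u" "nzw u" "t1 < t2"
  shows "pt u t1 < pt u t2"
  using assms(1,2)
proof (induction u)
  case Nil then show ?case by (simp add: nzw_def)
next
  case (Cons z u)
  show ?case
  proof (cases "snd z = 0")
    case True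
    then have "canon u" "nzw u" using Cons.prems unfolding canon_def nzw_def by auto
    then show ?thesis using Cons.IH True by (simp add: pt_Cons)
  next
    case False
    then have "snd z = 1" using Cons.prems(1) unfolding canon_def by simp
    then show ?thesis using assms(3) by (simp add: pt_Cons)
  qed
qed

lemma Lf_inj:
  assumes n2: "n \<ge> 2" and u: "u \<in> Wd n d" "canon u" "nzw u" and u': "u' \<in> Wd n d" "canon u'" "nzw u'"
    and eq: "line_set n (map fst u) (map snd u) = line_set n (map fst u') (map snd u')"
  shows "u = u'"
proof -
  have mm: "Min (line_set n (map fst v) (map snd v)) = pt v 0 \<and> Max (line_set n (map fst v) (map snd v)) = pt v (int (n - 1))"
    if "canon v" "nzw v" for v
  proof -
    have L: "line_set n (map fst v) (map snd v) = (\<lambda>t. pt v (int t)) ` {..n - 1}"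
      unfolding line_set_pt by auto
    have f: "finite (line_set n (map fst v) (map snd v))" unfolding L by simp
    have le: "pt v 0 \<le> y \<and> y \<le> pt v (int (n - 1))" if "y \<in> line_set n (map fst v) (map snd v)" for y
    proof -
      from that[unfolded L] obtain t where t: "t \<le> n - 1" "y = pt v (int t)" by auto
      have "pt v 0 \<le> pt v (int t)" using pt_mono[OF \<open>canon v\<close> \<open>nzw v\<close>, of 0 "int t"] by (cases "t = 0") auto
      moreover have "pt v (int t) \<le> pt v (int (n - 1))"
      proof (cases "t = n - 1")
        case True then show ?thesis by simp
      next
        case False
        then have "int t < int (n - 1)" using t by simp
        then show ?thesis using less_imp_le[OF pt_mono[OF \<open>canon v\<close> \<open>nzw v\<close>, of "int t" "int (n - 1)"]] by blast
      qed
      ultimately show ?thesis using t by simp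
    qed
    have "pt v 0 \<in> line_set n (map fst v) (map snd v)" "pt v (int (n - 1)) \<in> line_set n (map fst v) (map snd v)"
      unfolding L by (force, force)
    then show ?thesis using le f by (auto intro: Min_eqI Max_eqI)
  qed
  have e1: "pt u 0 = pt u' 0" and e2: "pt u (int (n - 1)) = pt u' (int (n - 1))"
    using mm[OF u(2,3)] mm[OF u'(2,3)] eq by metis+
  have l: "length u = length u'" using u u' unfolding Wd_def by simp
  show ?thesis
  proof (rule nth_equalityI[OF l])
    fix j assume j: "j < length u"
    have a: "fst (u ! j) = fst (u' ! j)"
      using arg_cong[OF e1, of "\<lambda>x. x ! j"] j l unfolding pt_def by (simp add: split_beta)
    have "fst (u ! j) + int (n - 1) * snd (u ! j) = fst (u' ! j) + int (n - 1) * snd (u' ! j)"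
      using arg_cong[OF e2, of "\<lambda>x. x ! j"] j l unfolding pt_def by (simp add: split_beta)
    then have "snd (u ! j) = snd (u' ! j)" using a n2 by simp
    then show "u ! j = u' ! j" using a by (simp add: prod_eq_iff)
  qed
qed

lemma lower:
  assumes n: "n = length w" and n2: "n \<ge> 2"
    and GW: "\<And>u. u \<in> GW \<Longrightarrow> u \<in> Wd n d \<and> good n u \<and> nzw u \<and> ((\<forall>i<n. w ! i = w ! (n - 1 - i)) \<or> odd (cnt S1 u + cnt (S2 n) u))"
  shows "card {u \<in> GW. canon u} \<le> f_grid w d (G0 w)"
proof -
  define C where "C = {u \<in> GW. canon u}"
  define Lf where "Lf u = line_set n (map fst u) (map snd u)" for u
  define S where "S = {L. is_line n d L \<and> line_contains n d (G0 w) w L}"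
  have fS: "finite S" using ub_pal(2)[of w d "G0 w"] n n2 unfolding S_def by simp
  have sub: "Lf ` C \<subseteq> S"
  proof
    fix L assume "L \<in> Lf ` C"
    then obtain u where uC: "u \<in> C" and L: "L = Lf u" by auto
    have uW: "u \<in> Wd n d" and g: "good n u" and nz: "nzw u" and can: "canon u"
      and q: "(\<forall>i<n. w ! i = w ! (n - 1 - i)) \<or> odd (cnt S1 u + cnt (S2 n) u)"
      using uC GW unfolding C_def by auto
    have lp: "line_pair n d (map fst u) (map snd u)" using word_line_pair[OF uW] nz n2 unfolding nzw_def by auto
    have cp: "canonical_pair n d (map fst u) (map snd u)" using lp can unfolding canonical_pair_def canon_def by simp
    have rd: "map (\<lambda>i. G0 w (shift (map fst u) (map snd u) (int i))) [0..<n] = w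
      \<or> rev (map (\<lambda>i. G0 w (shift (map fst u) (map snd u) (int i))) [0..<n]) = w"
      unfolding shift_map using reading[OF n n2 uW g nz q] by simp
    have "is_line n d L" unfolding is_line_def L Lf_def using lp by blast
    moreover have "line_contains n d (G0 w) w L" unfolding line_contains_def L Lf_def Let_def using cp rd by blast
    ultimately show "L \<in> S" unfolding S_def by simp
  qed
  have inj: "inj_on Lf C"
  proof (rule inj_onI)
    fix u u' assume "u \<in> C" "u' \<in> C" "Lf u = Lf u'"
    then show "u = u'" using Lf_inj[OF n2, of u d u'] GW unfolding C_def Lf_def by auto
  qed
  have "card C = card (Lf ` C)" using card_image[OF inj] by simp
  also have "\<dots> \<le> card S" by (rule card_mono[OF fS sub])
  finally show ?thesis unfolding C_def S_def f_grid_def n by simp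
qed

lemma fword_ge:
  assumes "length w \<ge> 2"
  shows "f_grid w d G \<le> f_word w d" "(\<And>G. f_grid w d G \<le> B) \<Longrightarrow> f_word w d \<le> B"
proof -
  have "f_grid w d G' \<le> (length w + 2) ^ d" for G' using ub_pal(1)[OF assms, of d G'] by linarith
  then have "range (f_grid w d) \<subseteq> {..(length w + 2) ^ d}" by auto
  then have f: "finite (range (f_grid w d))" using finite_subset by blast
  show "f_grid w d G \<le> f_word w d" unfolding f_word_def using f by (intro Max_ge) auto
  show "(\<And>G. f_grid w d G \<le> B) \<Longrightarrow> f_word w d \<le> B" unfolding f_word_def using f by (subst Max_le_iff) auto
qed

lemma odd_nzw: "odd (cnt S1 u + cnt (S2 n) u) \<Longrightarrow> nzw u"
proof (rule ccontr)
  assume o: "odd (cnt S1 u + cnt (S2 n) u)" and "\<not> nzw u"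
  then have "\<forall>z\<in>set u. snd z = 0" unfolding nzw_def by auto
  then have "cnt S1 u = 0" "cnt (S2 n) u = 0" unfolding cnt_def S1_def S2_def by (auto simp: filter_empty_conv)
  then show False using o by simp
qed

lemma lb_gen:
  assumes n: "n = length w" and n2: "n \<ge> 2"
    and GWd: "GW = {u \<in> Wd n d. good n u \<and> Q u}"
    and Qf: "\<And>u. u \<in> Wd n d \<Longrightarrow> Q u \<Longrightarrow> Q (map (flipz n) u)"
    and Qn: "\<And>u. Q u \<Longrightarrow> nzw u"
    and Qr: "\<And>u. Q u \<Longrightarrow> (\<forall>i<n. w ! i = w ! (n - 1 - i)) \<or> odd (cnt S1 u + cnt (S2 n) u)"
  shows "int (card {u \<in> Wd n d. Q u}) - int (card {u \<in> Wd n d. \<not> good n u}) \<le> 2 * int (f_word w d)"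
proof -
  have fW: "finite (Wd n d)" unfolding Wd_Ls by (rule finite_Ls[OF finite_Al])
  have h: "2 * card {u \<in> GW. canon u} = card GW"
  proof (rule flip_half[of GW n d])
    show "GW \<subseteq> Wd n d" unfolding GWd by blast
  next
    fix u assume "u \<in> GW"
    then have u: "u \<in> Wd n d" "good n u" "Q u" unfolding GWd by auto
    show "map (flipz n) u \<in> GW" unfolding GWd using flip_Wd[OF u(1)] good_flip[OF u(2)] Qf[OF u(1,3)] by blast
  next
    fix u assume "u \<in> GW"
    then show "nzw u" using Qn unfolding GWd by blast
  qed
  have GWp: "u \<in> Wd n d \<and> good n u \<and> nzw u \<and> ((\<forall>i<n. w ! i = w ! (n - 1 - i)) \<or> odd (cnt S1 u + cnt (S2 n) u))"
    if "u \<in> GW" for u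
  proof -
    have "u \<in> Wd n d" "good n u" "Q u" using that unfolding GWd by auto
    then show ?thesis using Qn Qr by blast
  qed
  have "card {u \<in> GW. canon u} \<le> f_grid w d (G0 w)"
    by (rule lower[OF n n2 GWp])
  also have "\<dots> \<le> f_word w d" using fword_ge(1)[of w] n n2 by simp
  finally have c: "card GW \<le> 2 * f_word w d" using h by simp
  have "{u \<in> Wd n d. Q u} \<subseteq> GW \<union> {u \<in> Wd n d. \<not> good n u}" unfolding GWd by auto
  then have "card {u \<in> Wd n d. Q u} \<le> card (GW \<union> {u \<in> Wd n d. \<not> good n u})"
    using fW by (intro card_mono) (auto simp: GWd)
  also have "\<dots> \<le> card GW + card {u \<in> Wd n d. \<not> good n u}" by (rule card_Un_le)
  finally show ?thesis using c by linarith
qed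

lemma lb_pal:
  assumes n: "n = length w" and n2: "n \<ge> 2" and pal: "\<forall>i<n. w ! i = w ! (n - 1 - i)"
  shows "int (n + 2) ^ d - int n ^ d - int (card {u \<in> Wd n d. \<not> good n u}) \<le> 2 * int (f_word w d)"
proof -
  have "int (card {u \<in> Wd n d. nzw u}) - int (card {u \<in> Wd n d. \<not> good n u}) \<le> 2 * int (f_word w d)"
    by (rule lb_gen[OF n n2 refl, where Q = nzw]) (simp add: flip_nzw, assumption, use pal in blast)
  then show ?thesis using nz_count[OF n2, of d] by linarith
qed

lemma lb_np:
  assumes n: "n = length w" and n2: "n \<ge> 2"
  shows "int (n + 2) ^ d - (int n - 2) ^ d - 2 * int (card {u \<in> Wd n d. \<not> good n u}) \<le> 4 * int (f_word w d)"
proof -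
  have "int (card {u \<in> Wd n d. odd (cnt S1 u + cnt (S2 n) u)}) - int (card {u \<in> Wd n d. \<not> good n u}) \<le> 2 * int (f_word w d)"
    by (rule lb_gen[OF n n2 refl, where Q = "\<lambda>u. odd (cnt S1 u + cnt (S2 n) u)"]) (simp_all add: flip_odd odd_nzw)
  then show ?thesis using odd_count[OF n2, of d] by linarith
qed

lemma div2h: "2 * (a::nat) \<le> b \<Longrightarrow> a \<le> b div 2" by presburger
lemma div4h: "4 * (a::nat) \<le> b \<Longrightarrow> a \<le> b div 4" by presburger

lemma sandwich1:
  fixes a l :: "nat \<Rightarrow> real"
  assumes "\<And>d. d \<ge> 1 \<Longrightarrow> l d \<le> a d" "\<And>d. d \<ge> 1 \<Longrightarrow> a d \<le> 1" "l \<longlonglongrightarrow> 1"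
  shows "a \<longlonglongrightarrow> 1"
proof (rule tendsto_sandwich[of l a sequentially "\<lambda>_. 1" 1])
  show "\<forall>\<^sub>F n in sequentially. l n \<le> a n" using assms(1) by (auto simp: eventually_sequentially)
  show "\<forall>\<^sub>F n in sequentially. a n \<le> 1" using assms(2) by (auto simp: eventually_sequentially)
qed (use assms(3) in auto)

lemma lim_low:
  fixes c K :: real
  assumes "\<bar>c\<bar> < 1"
  shows "(\<lambda>d. 1 - c ^ d - K / real d) \<longlonglongrightarrow> 1"
proof -
  have "(\<lambda>d. 1 - c ^ d - K / real d) \<longlonglongrightarrow> 1 - 0 - 0"
    by (intro tendsto_diff tendsto_const LIMSEQ_power_zero lim_const_over_n) (use assms in simp)
  then show ?thesis by simp
qed

lemma bad_real:
  assumes "n \<ge> 2" "d \<ge> 1"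
  shows "real (card {u \<in> Wd n d. \<not> good n u}) \<le> (real n + 2) * 64 * (real n + 2)^2 * (real n + 2) ^ d / real d"
proof -
  have "int (card {u \<in> Wd n d. \<not> good n u}) * int d \<le> int (n + 2) * (64 * int (n + 2) ^ 2 * int (n + 2) ^ d)"
    using bad_all[OF assms(1)] assms(2) by simp
  then have "real_of_int (int (card {u \<in> Wd n d. \<not> good n u}) * int d) \<le> real_of_int (int (n + 2) * (64 * int (n + 2) ^ 2 * int (n + 2) ^ d))"
    by (simp only: of_int_le_iff)
  then have "real (card {u \<in> Wd n d. \<not> good n u}) * real d \<le> (real n + 2) * 64 * (real n + 2)^2 * (real n + 2) ^ d"
    by (simp add: algebra_simps)
  then show ?thesis using assms(2) by (simp add: pos_le_divide_eq)
qed

theorem theorem6: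
  fixes w :: "'a list"
  assumes "length w \<ge> 2"
  shows "((\<forall>i<length w. w ! i = w ! (length w - 1 - i)) \<longrightarrow>
            (\<lambda>d. real (f_word w d) / ((1/2) * (real (length w) + 2) ^ d)) \<longlonglongrightarrow> 1)
       \<and> (\<not> (\<forall>i<length w. w ! i = w ! (length w - 1 - i)) \<longrightarrow>
            (\<lambda>d. real (f_word w d) / ((1/4) * (real (length w) + 2) ^ d)) \<longlonglongrightarrow> 1)"
proof -
  define n where "n = length w"
  have n2: "n \<ge> 2" using assms n_def by simp
  define M where "M = real n + 2"
  have M0: "M > 0" unfolding M_def by simp
  define K where "K = M * 64 * M^2"
  define Bad where "Bad d = real (card {u \<in> Wd n d. \<not> good n u})" for d
  have bad: "Bad d \<le> K * M ^ d / real d" if "d \<ge> 1" for d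
    using bad_real[OF n2 that] unfolding Bad_def K_def M_def by simp
  have Mpow: "M ^ d > 0" for d using M0 by simp
  have P1: "(\<lambda>d. real (f_word w d) / ((1/2) * (real (length w) + 2) ^ d)) \<longlonglongrightarrow> 1"
    if pal: "\<forall>i<length w. w ! i = w ! (length w - 1 - i)"
  proof (rule sandwich1[of "\<lambda>d. 1 - (real n / M) ^ d - K / real d"])
    fix d :: nat assume d: "d \<ge> 1"
    have "int (n + 2) ^ d - int n ^ d - int (card {u \<in> Wd n d. \<not> good n u}) \<le> 2 * int (f_word w d)"
      using lb_pal[OF n_def n2] pal unfolding n_def by blast
    then have "real_of_int (int (n + 2) ^ d - int n ^ d - int (card {u \<in> Wd n d. \<not> good n u})) \<le> real_of_int (2 * int (f_word w d))"
      by (simp only: of_int_le_iff)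
    then have lo: "M ^ d - real n ^ d - Bad d \<le> 2 * real (f_word w d)"
      unfolding M_def Bad_def by (simp add: add.commute)
    have "(1 - (real n / M) ^ d - K / real d) * M ^ d = M ^ d - real n ^ d - K * M ^ d / real d"
      using M0 by (simp add: field_simps power_divide)
    also have "\<dots> \<le> 2 * real (f_word w d)" using lo bad[OF d] by linarith
    finally have "1 - (real n / M) ^ d - K / real d \<le> 2 * real (f_word w d) / M ^ d"
      using Mpow by (simp add: le_divide_eq)
    then show "1 - (real n / M) ^ d - K / real d \<le> real (f_word w d) / ((1/2) * (real (length w) + 2) ^ d)"
      unfolding M_def n_def by (simp add: mult.commute)
    have "f_word w d \<le> (n + 2) ^ d div 2"
      using fword_ge(2)[OF assms, of d] div2h[OF ub_pal(1)[OF assms, of d]] unfolding n_def by blast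
    then have "2 * f_word w d \<le> (n + 2) ^ d" by linarith
    then have "real (2 * f_word w d) \<le> real ((n + 2) ^ d)" by (simp only: of_nat_le_iff)
    then have "2 * real (f_word w d) \<le> M ^ d" unfolding M_def by (simp add: add.commute)
    then show "real (f_word w d) / ((1/2) * (real (length w) + 2) ^ d) \<le> 1"
      using Mpow unfolding M_def n_def by (simp add: divide_le_eq)
  next
    show "(\<lambda>d. 1 - (real n / M) ^ d - K / real d) \<longlonglongrightarrow> 1" using M0 unfolding M_def by (intro lim_low) simp
  qed
  have P2: "(\<lambda>d. real (f_word w d) / ((1/4) * (real (length w) + 2) ^ d)) \<longlonglongrightarrow> 1"
    if np: "\<not> (\<forall>i<length w. w ! i = w ! (length w - 1 - i))"
  proof -
    obtain i where i: "i < length w" "w ! i \<noteq> w ! (length w - 1 - i)" using np by blast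
    show ?thesis
    proof (rule sandwich1[of "\<lambda>d. 1 - ((real n - 2) / M) ^ d - 2 * K / real d"])
      fix d :: nat assume d: "d \<ge> 1"
      have "int (n + 2) ^ d - (int n - 2) ^ d - 2 * int (card {u \<in> Wd n d. \<not> good n u}) \<le> 4 * int (f_word w d)"
        by (rule lb_np[OF n_def n2])
      then have "real_of_int (int (n + 2) ^ d - (int n - 2) ^ d - 2 * int (card {u \<in> Wd n d. \<not> good n u})) \<le> real_of_int (4 * int (f_word w d))"
        by (simp only: of_int_le_iff)
      then have lo: "M ^ d - (real n - 2) ^ d - 2 * Bad d \<le> 4 * real (f_word w d)"
        unfolding M_def Bad_def by (simp add: add.commute)
      have "(1 - ((real n - 2) / M) ^ d - 2 * K / real d) * M ^ d = M ^ d - (real n - 2) ^ d - 2 * (K * M ^ d / real d)"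
        using M0 by (simp add: field_simps power_divide)
      also have "\<dots> \<le> 4 * real (f_word w d)" using lo bad[OF d] by linarith
      finally have "1 - ((real n - 2) / M) ^ d - 2 * K / real d \<le> 4 * real (f_word w d) / M ^ d"
        using Mpow by (simp add: le_divide_eq)
      then show "1 - ((real n - 2) / M) ^ d - 2 * K / real d \<le> real (f_word w d) / ((1/4) * (real (length w) + 2) ^ d)"
        unfolding M_def n_def by (simp add: mult.commute)
      have "f_word w d \<le> (n + 2) ^ d div 4"
        using fword_ge(2)[OF assms, of d] div4h[OF ub_nonpal[OF assms i, of d]] unfolding n_def by blast
      then have "4 * f_word w d \<le> (n + 2) ^ d" by linarith
      then have "real (4 * f_word w d) \<le> real ((n + 2) ^ d)" by (simp only: of_nat_le_iff)
      then have "4 * real (f_word w d) \<le> M ^ d" unfolding M_def by (simp add: add.commute)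
      then show "real (f_word w d) / ((1/4) * (real (length w) + 2) ^ d) \<le> 1"
        using Mpow unfolding M_def n_def by (simp add: divide_le_eq)
    next
      have "\<bar>(real n - 2) / M\<bar> < 1" using n2 M0 unfolding M_def by (simp add: abs_less_iff field_simps)
      then show "(\<lambda>d. 1 - ((real n - 2) / M) ^ d - 2 * K / real d) \<longlonglongrightarrow> 1" by (rule lim_low)
    qed
  qed
  show ?thesis using P1 P2 by blast
qed

end
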